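(* Let $S$ be a compact surface, $\bar p=(p_1,\dots,p_m)$ a tuple of distinct points of $\mathrm{int}(S)$, and $u\in U_{\delta_e}\cap G_{\bar p}$. Then $u$ represents the identity in $\mathrm{PMCG}(S_{\bar p})$.
   Context: $G=\mathrm{Homeo}_{\partial S}(S)$; $S$ carries a fixed hyperbolic or flat Riemannian metric $d$ with geodesic boundary. $V_\epsilon=\{g\in G: d(x,gx)<\epsilon\ \forall x\}$, $U_\epsilon=V_\epsilon\cap V_\epsilon^{-1}$. $\delta_e>0$ is such that any $x,y$ with $d(x,y)<\delta_e$ are joined by a unique minimal geodesic segment lying in $B(x,\delta_e)\cap B(y,\delta_e)$ (with $y$ in the injectivity domain of the exponential map at $x$). $G_{\bar p}$ is the pointwise stabilizer of $\bar p$, $S_{\bar p}=S\setminus\{p_1,\dots,p_m\}$, and $\mathrm{PMCG}(S_{\bar p})$ is the quotient of $G_{\bar p}$ by homotopies fixing $\partial S$ and the points $p_i$. *)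

theory Defs
  imports "HOL-Analysis.Analysis"
begin

definition half_plane :: "(real \<times> real) set" where
  "half_plane = {z. snd z \<ge> 0}"

definition surface_chart :: "'a::topological_space set \<Rightarrow> 'a set \<Rightarrow> ('a \<Rightarrow> real \<times> real) \<Rightarrow> bool" where
  "surface_chart S U h \<longleftrightarrow> openin (top_of_set S) U \<and>
     (\<exists>h' V. homeomorphism U V h h' \<and> openin (top_of_set half_plane) V)"

definition is_surface :: "'a::topological_space set \<Rightarrow> bool" where
  "is_surface S \<longleftrightarrow> (\<forall>x\<in>S. \<exists>U h. x \<in> U \<and> surface_chart S U h)"

definition surface_boundary :: "'a::topological_space set \<Rightarrow> 'a set" where
  "surface_boundary S = {x\<in>S. \<exists>U h. x \<in> U \<and> surface_chart S U h \<and> snd (h x) = 0}"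

definition surface_interior :: "'a::topological_space set \<Rightarrow> 'a set" where
  "surface_interior S = S - surface_boundary S"

definition Homeo_rel_boundary :: "'a::topological_space set \<Rightarrow> ('a \<Rightarrow> 'a) set" where
  "Homeo_rel_boundary S = {g. (\<exists>g'. homeomorphism S S g g') \<and> (\<forall>x\<in>surface_boundary S. g x = x)}"

text \<open>A minimal (distance-realising, constant speed) geodesic segment in S from x to y,
  parametrised by [0,1].\<close>
definition minimal_geodesic :: "'a::metric_space set \<Rightarrow> 'a \<Rightarrow> 'a \<Rightarrow> (real \<Rightarrow> 'a) \<Rightarrow> bool" where
  "minimal_geodesic S x y \<gamma> \<longleftrightarrow> \<gamma> 0 = x \<and> \<gamma> 1 = y \<and> \<gamma> ` {0..1} \<subseteq> S \<and>
     (\<forall>s\<in>{0..1}. \<forall>t\<in>{0..1}. dist (\<gamma> s) (\<gamma> t) = \<bar>s - t\<bar> * dist x y)"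

definition delta_e_property :: "'a::metric_space set \<Rightarrow> real \<Rightarrow> bool" where
  "delta_e_property S \<delta> \<longleftrightarrow> \<delta> > 0 \<and>
     (\<forall>x\<in>S. \<forall>y\<in>S. dist x y < \<delta> \<longrightarrow>
        (\<exists>\<gamma>. minimal_geodesic S x y \<gamma> \<and>
             (\<forall>\<gamma>'. minimal_geodesic S x y \<gamma>' \<longrightarrow> (\<forall>t\<in>{0..1}. \<gamma>' t = \<gamma> t)) \<and>
             \<gamma> ` {0..1} \<subseteq> ball x \<delta> \<inter> ball y \<delta>))"

text \<open>V_\<epsilon> and U_\<epsilon> = V_\<epsilon> \<inter> V_\<epsilon>^{-1}.\<close>
definition V_eps :: "'a::metric_space set \<Rightarrow> real \<Rightarrow> ('a \<Rightarrow> 'a) set" where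
  "V_eps S \<epsilon> = {g \<in> Homeo_rel_boundary S. \<forall>x\<in>S. dist x (g x) < \<epsilon>}"

definition U_eps :: "'a::metric_space set \<Rightarrow> real \<Rightarrow> ('a \<Rightarrow> 'a) set" where
  "U_eps S \<epsilon> = {g \<in> V_eps S \<epsilon>. \<exists>g'. homeomorphism S S g g' \<and> g' \<in> V_eps S \<epsilon>}"

definition stabiliser :: "'a::topological_space set \<Rightarrow> nat \<Rightarrow> (nat \<Rightarrow> 'a) \<Rightarrow> ('a \<Rightarrow> 'a) set" where
  "stabiliser S m p = {g \<in> Homeo_rel_boundary S. \<forall>i<m. g (p i) = p i}"

text \<open>g represents the identity of PMCG(S_p): g is homotopic to the identity by a
  homotopy fixing the boundary and the marked points at all times.\<close>
definition trivial_in_PMCG :: "'a::topological_space set \<Rightarrow> nat \<Rightarrow> (nat \<Rightarrow> 'a) \<Rightarrow> ('a \<Rightarrow> 'a) \<Rightarrow> bool" where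
  "trivial_in_PMCG S m p g \<longleftrightarrow>
     homotopic_with (\<lambda>h. \<forall>x \<in> surface_boundary S \<union> p ` {..<m}. h x = x)
       (top_of_set S) (top_of_set S) id g"

end

theory Submission
  imports Defs
begin

lemma h1: fixes s t D :: real assumes "0<t" "t<1" "t<s" "s\<le>1"
  shows "\<bar>(s-t)/(1-t) - 1\<bar> * ((1-t)*D) = (1-s)*D"
proof -
  have "(s-t)/(1-t) - 1 = (s-1)/(1-t)" using assms by (simp add: field_simps)
  then have "\<bar>(s-t)/(1-t) - 1\<bar> = (1-s)/(1-t)" using assms by (simp add: abs_if field_simps)
  then show ?thesis using assms by simp
qed
lemma h2: fixes s t D :: real assumes "0<t" "t<1" "t<s" "s\<le>1"
  shows "\<bar>0 - (s-t)/(1-t)\<bar> * ((1-t)*D) = (s-t)*D"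
  using assms by (simp add: abs_if field_simps)
lemma h3: fixes s t D :: real assumes "0<t" "0\<le>s" "s\<le>t"
  shows "\<bar>s/t - 1\<bar> * (t*D) = (t-s)*D"
proof -
  have "s/t - 1 = (s-t)/t" using assms by (simp add: field_simps)
  then have "\<bar>s/t - 1\<bar> = (t-s)/t" using assms by (simp add: abs_if field_simps)
  then show ?thesis using assms by simp
qed
lemma h4: fixes s t D :: real assumes "0<t" "0\<le>s" 
  shows "\<bar>0 - s/t\<bar> * (t*D) = s*D"
  using assms by simp
lemma h5: fixes s r t D :: real assumes "0<t" "s\<le>r"
  shows "\<bar>s/t - r/t\<bar> * (t*D) = (r-s)*D"
proof -
  have "s/t - r/t = -((r-s)/t)" by (simp add: diff_divide_distrib)
  then have "\<bar>s/t - r/t\<bar> = (r-s)/t" using assms by simp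
  then show ?thesis using assms by simp
qed
lemma h6: fixes s r t D :: real assumes "t<1" "s\<le>r"
  shows "\<bar>(s-t)/(1-t) - (r-t)/(1-t)\<bar> * ((1-t)*D) = (r-s)*D"
proof -
  have "(s-t)/(1-t) - (r-t)/(1-t) = -((r-s)/(1-t))" by (simp add: diff_divide_distrib)
  then have "\<bar>(s-t)/(1-t) - (r-t)/(1-t)\<bar> = (r-s)/(1-t)" using assms by simp
  then show ?thesis using assms by simp
qed

lemma concat_geo:
  fixes S :: "'a::metric_space set"
  assumes a: "minimal_geodesic S x z \<alpha>" and b: "minimal_geodesic S z y \<beta>"
    and dxz: "dist x z = t*D" and dzy: "dist z y = (1-t)*D" and D: "D = dist x y"
    and t: "0<t" "t<1"
  shows "minimal_geodesic S x y (\<lambda>s. if s \<le> t then \<alpha>(s/t) else \<beta>((s-t)/(1-t)))"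
    (is "minimal_geodesic S x y ?c")
proof -
  have a0: "\<alpha> 0 = x" and a1: "\<alpha> 1 = z" and aS: "\<alpha> ` {0..1} \<subseteq> S"
    and ad: "\<And>s r. s\<in>{0..1} \<Longrightarrow> r\<in>{0..1} \<Longrightarrow> dist (\<alpha> s) (\<alpha> r) = \<bar>s - r\<bar> * (t*D)"
    using a dxz unfolding minimal_geodesic_def by auto
  have b0: "\<beta> 0 = z" and b1: "\<beta> 1 = y" and bS: "\<beta> ` {0..1} \<subseteq> S"
    and bd: "\<And>s r. s\<in>{0..1} \<Longrightarrow> r\<in>{0..1} \<Longrightarrow> dist (\<beta> s) (\<beta> r) = \<bar>s - r\<bar> * ((1-t)*D)"
    using b dzy unfolding minimal_geodesic_def by auto
  have D0: "D \<ge> 0" using D by simp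
  have c0: "?c 0 = x" using t a0 by simp
  have c1: "?c 1 = y" using t b1 by simp
  have cS: "?c ` {0..1} \<subseteq> S"
  proof
    fix w assume "w \<in> ?c ` {0..1}"
    then obtain s where s: "s \<in> {0..1}" "w = ?c s" by auto
    show "w \<in> S"
    proof (cases "s \<le> t")
      case True
      then have "s/t \<in> {0..1}" using s t by auto
      then show ?thesis using aS s True by auto
    next
      case False
      then have "(s-t)/(1-t) \<in> {0..1}" using s t by (auto simp: field_simps)
      then show ?thesis using bS s False by auto
    qed
  qed
  have cx: "dist x (?c s) = s * D" and cy: "dist (?c s) y = (1-s)*D" if s: "s \<in> {0..1}" for s
  proof -
    have "dist x (?c s) = s * D \<and> dist (?c s) y = (1-s)*D"
    proof (cases "s \<le> t")
      case True
      then have st: "s/t \<in> {0..1}" using s t by auto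
      have "dist x (\<alpha> (s/t)) = s*D"
        using ad[of 0 "s/t"] st a0 t s by auto
      moreover have "dist (\<alpha> (s/t)) z = (t - s) * D"
        using ad[of "s/t" 1] st a1 t True s h3[of t s D] by auto
      moreover have "dist (\<alpha> (s/t)) y \<le> (1-s)*D"
        using dist_triangle[of "\<alpha> (s/t)" y z] dzy \<open>dist (\<alpha> (s/t)) z = (t - s) * D\<close>
        by (simp add: algebra_simps)
      moreover have "D \<le> s*D + dist (\<alpha> (s/t)) y"
        using dist_triangle[of x y "\<alpha> (s/t)"] D \<open>dist x (\<alpha> (s/t)) = s*D\<close> by simp
      ultimately show ?thesis using True by (simp add: algebra_simps)
    next
      case False
      then have st: "(s-t)/(1-t) \<in> {0..1}" using s t by (auto simp: field_simps)
      have "dist (\<beta> ((s-t)/(1-t))) y = (1-s)*D"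
        using bd[of "(s-t)/(1-t)" 1] st b1 t False s h1[of t s D] by auto
      moreover have "dist z (\<beta> ((s-t)/(1-t))) = (s - t) * D"
        using bd[of 0 "(s-t)/(1-t)"] st b0 t False s h2[of t s D] by auto
      moreover have "dist x (\<beta> ((s-t)/(1-t))) \<le> s*D"
        using dist_triangle[of x "\<beta> ((s-t)/(1-t))" z] dxz \<open>dist z (\<beta> ((s-t)/(1-t))) = (s - t) * D\<close>
        by (simp add: algebra_simps)
      moreover have "D \<le> dist x (\<beta> ((s-t)/(1-t))) + (1-s)*D"
        using dist_triangle[of x y "\<beta> ((s-t)/(1-t))"] D \<open>dist (\<beta> ((s-t)/(1-t))) y = (1-s)*D\<close> by simp
      ultimately show ?thesis using False by (simp add: algebra_simps)
    qed
    then show "dist x (?c s) = s * D" "dist (?c s) y = (1-s)*D" by auto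
  qed
  have gen: "dist (?c s) (?c r) = (r - s) * D"
    if s: "s \<in> {0..1}" and r: "r \<in> {0..1}" and sr: "s \<le> r" for s r
  proof -
    have le1: "dist (?c s) (?c r) \<le> (r - s) * D"
    proof (cases "r \<le> t")
      case True
      then have "s \<le> t" using sr by simp
      then have "dist (?c s) (?c r) = \<bar>s/t - r/t\<bar> * (t*D)"
        using True ad[of "s/t" "r/t"] s r t by auto
      also have "\<dots> = (r-s)*D" using t sr h5 by simp
      finally show ?thesis by simp
    next
      case False
      show ?thesis
      proof (cases "s \<le> t")
        case True
        have "dist (?c s) z = (t - s) * D"
          using ad[of "s/t" 1] s t a1 True h3[of t s D] by auto
        moreover have "dist z (?c r) = (r - t) * D"
          proof -
          have rr: "(r-t)/(1-t) \<in> {0..1}" using r t False by (auto simp: field_simps)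
          have "dist z (?c r) = \<bar>0 - (r-t)/(1-t)\<bar> * ((1-t)*D)"
            using bd[OF _ rr, of 0] b0 False by simp
          also have "\<dots> = (r-t)*D" using h2[of t r D] t False r by simp
          finally show ?thesis .
        qed
        ultimately show ?thesis using dist_triangle[of "?c s" "?c r" z]
          by (simp add: algebra_simps)
      next
        case False2: False
        have "dist (?c s) (?c r) = \<bar>(s-t)/(1-t) - (r-t)/(1-t)\<bar> * ((1-t)*D)"
          using False False2 bd[of "(s-t)/(1-t)" "(r-t)/(1-t)"] s r t by (auto simp: field_simps)
        also have "\<dots> = (r-s)*D" using t sr h6 by simp
        finally show ?thesis by simp
      qed
    qed
    have "D \<le> dist x (?c s) + dist (?c s) (?c r) + dist (?c r) y"
      using dist_triangle[of x y "?c s"] dist_triangle[of "?c s" y "?c r"] D by simp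
    then have "(r - s) * D \<le> dist (?c s) (?c r)" using cx[OF s] cy[OF r]
      by (simp add: algebra_simps)
    with le1 show ?thesis by simp
  qed
  have "dist (?c s) (?c r) = \<bar>s - r\<bar> * dist x y" if "s \<in> {0..1}" "r \<in> {0..1}" for s r
  proof (cases "s \<le> r")
    case True then show ?thesis using gen that D by simp
  next
    case False then show ?thesis using gen[of r s] that D by (simp add: dist_commute)
  qed
  then show ?thesis unfolding minimal_geodesic_def using c0 c1 cS by auto
qed


lemma geo_point:
  fixes S :: "'a::metric_space set"
  assumes dp: "delta_e_property S \<delta>" and x: "x\<in>S" and y: "y\<in>S" and xy: "dist x y < \<delta>"
    and t: "t \<in> {0..1}"
  shows "\<exists>!z. z\<in>S \<and> dist x z = t*dist x y \<and> dist z y = (1-t)*dist x y"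
proof -
  obtain \<gamma> where g: "minimal_geodesic S x y \<gamma>"
    and uq: "\<And>\<gamma>'. minimal_geodesic S x y \<gamma>' \<Longrightarrow> \<forall>t\<in>{0..1}. \<gamma>' t = \<gamma> t"
    using dp x y xy unfolding delta_e_property_def by blast
  have g0: "\<gamma> 0 = x" and g1: "\<gamma> 1 = y" and gS: "\<gamma> ` {0..1} \<subseteq> S"
    and gd: "\<And>s r. s\<in>{0..1} \<Longrightarrow> r\<in>{0..1} \<Longrightarrow> dist (\<gamma> s) (\<gamma> r) = \<bar>s - r\<bar> * dist x y"
    using g unfolding minimal_geodesic_def by auto
  let ?D = "dist x y"
  have P: "\<gamma> t \<in> S \<and> dist x (\<gamma> t) = t*?D \<and> dist (\<gamma> t) y = (1-t)*?D"
    using gS t gd[of 0 t] gd[of t 1] g0 g1 by auto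
  have U: "z = \<gamma> t" if z: "z\<in>S" "dist x z = t*?D" "dist z y = (1-t)*?D" for z
  proof (cases "?D = 0 \<or> t = 0")
    case True
    then have "dist x z = 0" "dist x (\<gamma> t) = 0" using z P by auto
    then show ?thesis by simp
  next
    case False
    show ?thesis
    proof (cases "t = 1")
      case True
      then have "dist z y = 0" "dist (\<gamma> t) y = 0" using z P by auto
      then show ?thesis by simp
    next
      case False2: False
      have t01: "0 < t" "t < 1" using t False False2 by auto
      have le1: "t*?D \<le> ?D" "(1-t)*?D \<le> ?D" using t01 by (auto intro: mult_left_le_one_le)
      have "dist x z < \<delta>" using z le1 xy by linarith
      then obtain \<alpha> where a: "minimal_geodesic S x z \<alpha>"
        using dp x z unfolding delta_e_property_def by blast
      have "dist z y < \<delta>" using z le1 xy by linarith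
      then obtain \<beta> where b: "minimal_geodesic S z y \<beta>"
        using dp y z unfolding delta_e_property_def by blast
      have c: "minimal_geodesic S x y (\<lambda>s. if s \<le> t then \<alpha>(s/t) else \<beta>((s-t)/(1-t)))"
        by (rule concat_geo[OF a b z(2) z(3) refl t01])
      have "(\<lambda>s. if s \<le> t then \<alpha>(s/t) else \<beta>((s-t)/(1-t))) t = \<gamma> t"
        using uq[OF c] t by blast
      moreover have "\<alpha> 1 = z" using a unfolding minimal_geodesic_def by auto
      ultimately show ?thesis using t01 by simp
    qed
  qed
  show ?thesis using P U by blast
qed


lemma cont_Z:
  fixes S :: "'a::metric_space set" and u :: "'a \<Rightarrow> 'a"
  assumes cS: "compact S" and cu: "continuous_on S u"
    and Pex: "\<And>x t. x \<in> S \<Longrightarrow> t \<in> {0..1} \<Longrightarrow>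
       Z t x \<in> S \<and> dist x (Z t x) = t * dist x (u x) \<and> dist (Z t x) (u x) = (1-t) * dist x (u x)"
    and Pun: "\<And>x t z. x \<in> S \<Longrightarrow> t \<in> {0..1} \<Longrightarrow> z \<in> S \<Longrightarrow>
       dist x z = t * dist x (u x) \<Longrightarrow> dist z (u x) = (1-t) * dist x (u x) \<Longrightarrow> z = Z t x"
  shows "continuous_on ({0..1} \<times> S) (\<lambda>(t,x). Z t x)"
proof (rule continuous_on_sequentiallyI)
  fix q :: "nat \<Rightarrow> real \<times> 'a" and a
  assume qin: "\<forall>n. q n \<in> {0..1} \<times> S" and ain: "a \<in> {0..1} \<times> S" and qa: "q \<longlonglongrightarrow> a"
  define H where "H = (\<lambda>(t,x). Z t x)"
  show "(\<lambda>n. (\<lambda>(t,x). Z t x) (q n)) \<longlonglongrightarrow> (\<lambda>(t,x). Z t x) a"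
    unfolding H_def[symmetric]
  proof (rule tendstoI, rule ccontr)
    fix e :: real assume e: "e > 0" and ne: "\<not> eventually (\<lambda>n. dist (H (q n)) (H a) < e) sequentially"
    obtain r :: "nat \<Rightarrow> nat" where r: "strict_mono r" and rn: "\<And>n. \<not> dist (H (q (r n))) (H a) < e"
      using not_eventually_sequentiallyD[OF ne] by blast
    have "\<forall>n. H (q (r n)) \<in> S"
    proof
      fix n
      have "fst (q (r n)) \<in> {0..1}" "snd (q (r n)) \<in> S" using qin by (auto simp: mem_Times_iff)
      then show "H (q (r n)) \<in> S" using Pex unfolding H_def by (simp add: case_prod_beta)
    qed
    then obtain l r2 where l: "l \<in> S" and r2: "strict_mono r2" and lim: "((\<lambda>n. H (q (r n))) \<circ> r2) \<longlonglongrightarrow> l"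
      using seq_compactE[OF compact_imp_seq_compact[OF cS], of "\<lambda>n. H (q (r n))"] by blast
    define k where "k = r \<circ> r2"
    have k: "strict_mono k" unfolding k_def using r r2 by (rule strict_mono_o)
    have qk: "(\<lambda>n. q (k n)) \<longlonglongrightarrow> a" using LIMSEQ_subseq_LIMSEQ[OF qa k] by (simp add: o_def)
    obtain ta xa where a: "a = (ta, xa)" by (cases a)
    define \<tau> where "\<tau> n = fst (q (k n))" for n
    define \<xi> where "\<xi> n = snd (q (k n))" for n
    define w where "w n = H (q (k n))" for n
    have wl: "w \<longlonglongrightarrow> l" using lim unfolding w_def k_def by (simp add: o_def)
    have \<tau>: "\<tau> \<longlonglongrightarrow> ta" unfolding \<tau>_def using tendsto_fst[OF qk] a by simp
    have \<xi>: "\<xi> \<longlonglongrightarrow> xa" unfolding \<xi>_def using tendsto_snd[OF qk] a by simp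
    have \<xi>S: "\<And>n. \<xi> n \<in> S" and \<tau>01: "\<And>n. \<tau> n \<in> {0..1}"
      using qin unfolding \<xi>_def \<tau>_def by (simp_all add: mem_Times_iff)
    have xa: "xa \<in> S" and ta: "ta \<in> {0..1}" using ain a by auto
    have u\<xi>: "(\<lambda>n. u (\<xi> n)) \<longlonglongrightarrow> u xa"
      using continuous_on_tendsto_compose[OF cu \<xi> xa] \<xi>S by simp
    have wq: "\<And>n. w n = Z (\<tau> n) (\<xi> n)" unfolding w_def H_def \<tau>_def \<xi>_def
      by (simp add: case_prod_beta)
    have e1: "\<And>n. dist (\<xi> n) (w n) = \<tau> n * dist (\<xi> n) (u (\<xi> n))"
      and e2: "\<And>n. dist (w n) (u (\<xi> n)) = (1 - \<tau> n) * dist (\<xi> n) (u (\<xi> n))"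
      using Pex[OF \<xi>S \<tau>01] wq by auto
    have L1: "(\<lambda>n. dist (\<xi> n) (w n)) \<longlonglongrightarrow> dist xa l" by (intro tendsto_intros \<xi> wl)
    have L1': "(\<lambda>n. dist (\<xi> n) (w n)) \<longlonglongrightarrow> ta * dist xa (u xa)"
      unfolding e1 by (intro tendsto_intros \<xi> \<tau> u\<xi>)
    have L2: "(\<lambda>n. dist (w n) (u (\<xi> n))) \<longlonglongrightarrow> dist l (u xa)" by (intro tendsto_intros u\<xi> wl)
    have L2': "(\<lambda>n. dist (w n) (u (\<xi> n))) \<longlonglongrightarrow> (1 - ta) * dist xa (u xa)"
      unfolding e2 by (intro tendsto_intros \<xi> \<tau> u\<xi>)
    have "l = Z ta xa"
      using Pun[OF xa ta l LIMSEQ_unique[OF L1 L1'] LIMSEQ_unique[OF L2 L2']] .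
    then have "l = H a" using a H_def by simp
    then have "eventually (\<lambda>n. dist (w n) (H a) < e) sequentially"
      using wl e by (simp add: tendsto_iff)
    then obtain N where "\<forall>n\<ge>N. dist (w n) (H a) < e" unfolding eventually_sequentially by blast
    then have "dist (w N) (H a) < e" by simp
    then show False using rn[of "r2 N"] unfolding w_def k_def by simp
  qed
qed

theorem mainTheorem6:
  fixes S :: "'a::metric_space set" and m :: nat and p :: "nat \<Rightarrow> 'a"
    and \<delta>e :: real and u :: "'a \<Rightarrow> 'a"
  assumes "compact S" and "is_surface S"
    and "delta_e_property S \<delta>e"
    and "inj_on p {..<m}" and "\<forall>i<m. p i \<in> surface_interior S"
    and "u \<in> U_eps S \<delta>e \<inter> stabiliser S m p"
  shows "trivial_in_PMCG S m p u"
proof -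
  have uH: "u \<in> Homeo_rel_boundary S" and ud: "\<forall>x\<in>S. dist x (u x) < \<delta>e"
    and up: "\<forall>i<m. u (p i) = p i"
    using assms(6) unfolding U_eps_def V_eps_def stabiliser_def by auto
  obtain u' where hu: "homeomorphism S S u u'" and ub: "\<forall>x\<in>surface_boundary S. u x = x"
    using uH unfolding Homeo_rel_boundary_def by auto
  have cu: "continuous_on S u" and uS: "\<And>x. x \<in> S \<Longrightarrow> u x \<in> S"
    using hu unfolding homeomorphism_def by auto
  define P where "P x t z \<longleftrightarrow> z \<in> S \<and> dist x z = t * dist x (u x) \<and> dist z (u x) = (1-t) * dist x (u x)"
    for x t z
  have ex1: "\<exists>!z. P x t z" if "x \<in> S" "t \<in> {0..1}" for x t
    unfolding P_def using geo_point[OF assms(3) that(1) uS[OF that(1)] ud[rule_format, OF that(1)] that(2)] .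
  define Z where "Z t x = (THE z. P x t z)" for t x
  have PZ: "P x t (Z t x)" if "x \<in> S" "t \<in> {0..1}" for x t
    unfolding Z_def using theI'[OF ex1[OF that]] .
  have ZU: "z = Z t x" if "x \<in> S" "t \<in> {0..1}" "P x t z" for x t z
    using ex1[OF that(1,2)] PZ[OF that(1,2)] that(3) by blast
  have cZ: "continuous_on ({0..1} \<times> S) (\<lambda>(t,x). Z t x)"
  proof (rule cont_Z[OF assms(1) cu])
    show "\<And>x t. x \<in> S \<Longrightarrow> t \<in> {0..1} \<Longrightarrow>
       Z t x \<in> S \<and> dist x (Z t x) = t * dist x (u x) \<and> dist (Z t x) (u x) = (1-t) * dist x (u x)"
      using PZ unfolding P_def by blast
    show "\<And>x t z. x \<in> S \<Longrightarrow> t \<in> {0..1} \<Longrightarrow> z \<in> S \<Longrightarrow>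
       dist x z = t * dist x (u x) \<Longrightarrow> dist z (u x) = (1-t) * dist x (u x) \<Longrightarrow> z = Z t x"
      using ZU unfolding P_def by blast
  qed
  have Z0: "Z 0 x = x" if "x \<in> S" for x
    using ZU[OF that, of 0 x] that uS by (auto simp: P_def dist_commute)
  have Z1: "Z 1 x = u x" if "x \<in> S" for x
    using ZU[OF that, of 1 "u x"] that uS by (auto simp: P_def)
  have Zfix: "Z t x = x" if "x \<in> S" "t \<in> {0..1}" "u x = x" for x t
    using ZU[OF that(1,2), of x] that by (auto simp: P_def)
  define h where "h = (\<lambda>(t,x). if x \<in> S then Z t x else if t = 0 then x else u x)"
  have hc: "continuous_on ({0..1} \<times> S) h"
    using cZ by (rule continuous_on_eq) (auto simp: h_def)
  have him: "h ` ({0..1} \<times> S) \<subseteq> S" using PZ by (auto simp: h_def P_def)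
  have bS: "surface_boundary S \<subseteq> S" unfolding surface_boundary_def by auto
  have pS: "p i \<in> S" if "i < m" for i
    using assms(5) that unfolding surface_interior_def by auto
  show ?thesis
    unfolding trivial_in_PMCG_def homotopic_with_def
  proof (intro exI conjI)
    show "continuous_map (prod_topology (top_of_set {0..1}) (top_of_set S)) (top_of_set S) h"
      using hc him image_subset_iff_funcset[of h "{0..1} \<times> S" S]
      by (simp add: continuous_map_subtopology_eu)
    show "\<forall>x. h (0, x) = id x" using Z0 by (auto simp: h_def)
    show "\<forall>x. h (1, x) = u x" using Z1 by (auto simp: h_def)
    show "\<forall>t\<in>{0..1}. \<forall>x\<in>surface_boundary S \<union> p ` {..<m}. h (t, x) = x"
      using Zfix bS pS ub up by (auto simp: h_def)
  qed
qed

end
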